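(* Let $X$ be a set and $f:X\to X$ a map. The functional Alexandroff topology on $X$ associated to $f$ is uniformizable if and only if $\mathrm{Per}(f)=X$.
   Context: For $a\in X$, $V_f(a):=\{x\in X:\exists n\ge0,\ f^n(x)=a\}$; the functional Alexandroff topology associated to $f$ is the topology on $X$ with basis $\{V_f(a):a\in X\}$. $\mathrm{Per}(f)=\{x\in X:\exists n\ge1,\ f^n(x)=x\}$. A topology is uniformizable if it is induced by some uniform structure on $X$. *)

theory Defs
  imports "HOL-Analysis.Analysis"
begin

definition Vf :: "'a set \<Rightarrow> ('a \<Rightarrow> 'a) \<Rightarrow> 'a \<Rightarrow> 'a set" where
  "Vf X f a = {x \<in> X. \<exists>n::nat. (f ^^ n) x = a}"

definition alex_top :: "'a set \<Rightarrow> ('a \<Rightarrow> 'a) \<Rightarrow> 'a topology" where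
  "alex_top X f = topology (\<lambda>U. \<exists>\<B>. \<B> \<subseteq> Vf X f ` X \<and> U = \<Union>\<B>)"

definition Per :: "'a set \<Rightarrow> ('a \<Rightarrow> 'a) \<Rightarrow> 'a set" where
  "Per X f = {x \<in> X. \<exists>n::nat. n \<ge> 1 \<and> (f ^^ n) x = x}"

definition uniformity_on :: "'a set \<Rightarrow> ('a \<times> 'a) set set \<Rightarrow> bool" where
  "uniformity_on X \<Phi> \<longleftrightarrow>
     \<Phi> \<noteq> {} \<and>
     (\<forall>U\<in>\<Phi>. U \<subseteq> X \<times> X \<and> Id_on X \<subseteq> U) \<and>
     (\<forall>U\<in>\<Phi>. \<forall>V. U \<subseteq> V \<and> V \<subseteq> X \<times> X \<longrightarrow> V \<in> \<Phi>) \<and>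
     (\<forall>U\<in>\<Phi>. \<forall>V\<in>\<Phi>. U \<inter> V \<in> \<Phi>) \<and>
     (\<forall>U\<in>\<Phi>. U\<inverse> \<in> \<Phi>) \<and>
     (\<forall>U\<in>\<Phi>. \<exists>V\<in>\<Phi>. V O V \<subseteq> U)"

definition uniformizable :: "'a topology \<Rightarrow> bool" where
  "uniformizable T \<longleftrightarrow>
     (\<exists>\<Phi>. uniformity_on (topspace T) \<Phi> \<and>
        (\<forall>G. openin T G \<longleftrightarrow>
               G \<subseteq> topspace T \<and> (\<forall>x\<in>G. \<exists>U\<in>\<Phi>. {y. (x, y) \<in> U} \<subseteq> G)))"

end

theory Submission
  imports Defs
begin

lemma Vf_sub: "Vf X f a \<subseteq> X"
  unfolding Vf_def by auto

lemma Vf_self: "a \<in> X \<Longrightarrow> a \<in> Vf X f a"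
  unfolding Vf_def by (auto intro: exI[of _ 0])

lemma Vf_trans:
  assumes "x \<in> Vf X f a" shows "Vf X f x \<subseteq> Vf X f a"
proof
  fix y assume "y \<in> Vf X f x"
  then obtain k where y: "y \<in> X" "(f ^^ k) y = x" unfolding Vf_def by auto
  from assms obtain n where "(f ^^ n) x = a" unfolding Vf_def by auto
  then have "(f ^^ (n + k)) y = a" using y by (simp add: funpow_add)
  then show "y \<in> Vf X f a" using y unfolding Vf_def by auto
qed

lemma P_iff:
  "(\<exists>\<B>. \<B> \<subseteq> Vf X f ` X \<and> U = \<Union>\<B>) \<longleftrightarrow> (U \<subseteq> X \<and> (\<forall>x\<in>U. Vf X f x \<subseteq> U))"
proof
  assume "\<exists>\<B>. \<B> \<subseteq> Vf X f ` X \<and> U = \<Union>\<B>"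
  then obtain B where B: "B \<subseteq> Vf X f ` X" "U = \<Union>B" by (elim exE conjE)
  show "U \<subseteq> X \<and> (\<forall>x\<in>U. Vf X f x \<subseteq> U)"
  proof
    show "U \<subseteq> X"
    proof
      fix x assume "x \<in> U"
      then obtain A where A: "A \<in> B" "x \<in> A" using B(2) by (auto elim: UnionE)
      from subsetD[OF B(1) A(1)] obtain a where "A = Vf X f a" by (rule imageE)
      then show "x \<in> X" using A(2) Vf_sub[of X f a] by (simp add: subsetD)
    qed
    show "\<forall>x\<in>U. Vf X f x \<subseteq> U"
    proof
      fix x assume "x \<in> U"
      then obtain A where A: "A \<in> B" "x \<in> A" using B(2) by (auto elim: UnionE)
      from subsetD[OF B(1) A(1)] obtain a where a: "A = Vf X f a" by (rule imageE)
      have "Vf X f x \<subseteq> A" using Vf_trans[of x X f a] A a by simp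
      then show "Vf X f x \<subseteq> U" using A B(2) by auto
    qed
  qed
next
  assume h: "U \<subseteq> X \<and> (\<forall>x\<in>U. Vf X f x \<subseteq> U)"
  have m1: "Vf X f ` U \<subseteq> Vf X f ` X" using h by (simp add: image_mono)
  have m2: "U = \<Union>(Vf X f ` U)"
  proof
    show "U \<subseteq> \<Union>(Vf X f ` U)"
    proof
      fix x assume "x \<in> U"
      then have "x \<in> Vf X f x" using h Vf_self[of x X f] by auto
      then show "x \<in> \<Union>(Vf X f ` U)" using \<open>x \<in> U\<close> by auto
    qed
    show "\<Union>(Vf X f ` U) \<subseteq> U" using h by auto
  qed
  show "\<exists>\<B>. \<B> \<subseteq> Vf X f ` X \<and> U = \<Union>\<B>" by (intro exI[of _ "Vf X f ` U"] conjI m1 m2)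
qed

lemma open_alex:
  "openin (alex_top X f) U \<longleftrightarrow> (U \<subseteq> X \<and> (\<forall>x\<in>U. Vf X f x \<subseteq> U))"
proof -
  have eq: "(\<lambda>U. \<exists>\<B>. \<B> \<subseteq> Vf X f ` X \<and> U = \<Union>\<B>) = (\<lambda>U. U \<subseteq> X \<and> (\<forall>x\<in>U. Vf X f x \<subseteq> U))"
    by (intro ext) (rule P_iff)
  have "istopology (\<lambda>U. U \<subseteq> X \<and> (\<forall>x\<in>U. Vf X f x \<subseteq> U))"
    unfolding istopology_def
  proof (rule conjI; intro allI impI)
    fix S T assume "S \<subseteq> X \<and> (\<forall>x\<in>S. Vf X f x \<subseteq> S)" "T \<subseteq> X \<and> (\<forall>x\<in>T. Vf X f x \<subseteq> T)"
    then show "S \<inter> T \<subseteq> X \<and> (\<forall>x\<in>S \<inter> T. Vf X f x \<subseteq> S \<inter> T)" by auto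
  next
    fix K assume "\<forall>S\<in>K. S \<subseteq> X \<and> (\<forall>x\<in>S. Vf X f x \<subseteq> S)"
    then show "\<Union>K \<subseteq> X \<and> (\<forall>x\<in>\<Union>K. Vf X f x \<subseteq> \<Union>K)" by blast
  qed
  then show ?thesis unfolding alex_top_def eq by simp
qed

lemma top_alex1: "topspace (alex_top X f) \<subseteq> X"
proof -
  have h: "openin (alex_top X f) (topspace (alex_top X f))" by (rule openin_topspace)
  show ?thesis using h unfolding open_alex by (rule conjunct1)
qed

lemma top_alex2: "X \<subseteq> topspace (alex_top X f)"
proof -
  have "\<forall>x\<in>X. Vf X f x \<subseteq> X" using Vf_sub by (intro ballI)
  then have "openin (alex_top X f) X" unfolding open_alex by simp
  then show ?thesis by (rule openin_subset)
qed

lemma top_alex: "topspace (alex_top X f) = X"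
  by (rule subset_antisym[OF top_alex1 top_alex2])

lemma per_sym:
  assumes per: "Per X f = X" and x: "x \<in> X" and y: "y \<in> Vf X f x"
  shows "x \<in> Vf X f y"
proof -
  obtain n where yX: "y \<in> X" and n: "(f ^^ n) y = x" using y unfolding Vf_def by auto
  obtain p where p: "p \<ge> 1" "(f ^^ p) y = y" using per yX unfolding Per_def by auto
  have pk: "(f ^^ (p * k)) y = y" for k
  proof (induction k)
    case 0 then show ?case by simp
  next
    case (Suc k)
    have "(f ^^ (p * Suc k)) y = (f ^^ p) ((f ^^ (p * k)) y)"
      by (simp add: funpow_add)
    then show ?case using Suc p(2) by simp
  qed
  have le: "n \<le> p * n" using p by simp
  have "(f ^^ (p * n - n)) x = (f ^^ (p * n - n)) ((f ^^ n) y)" using n by simp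
  also have "\<dots> = (f ^^ (p * n - n + n)) y" by (simp add: funpow_add)
  also have "p * n - n + n = p * n" using le by simp
  finally have "(f ^^ (p * n - n)) x = y" using pk by simp
  then show ?thesis using x unfolding Vf_def by auto
qed

theorem mainTheorem9:
  fixes X :: "'a set" and f :: "'a \<Rightarrow> 'a"
  assumes "f ` X \<subseteq> X"
  shows "uniformizable (alex_top X f) \<longleftrightarrow> Per X f = X"
proof
  assume "uniformizable (alex_top X f)"
  then obtain \<Phi> where uni: "uniformity_on X \<Phi>" and
    op0: "\<forall>G. openin (alex_top X f) G \<longleftrightarrow>
               G \<subseteq> X \<and> (\<forall>x\<in>G. \<exists>U\<in>\<Phi>. {y. (x, y) \<in> U} \<subseteq> G)"
    unfolding uniformizable_def top_alex by (elim exE conjE) (rule that)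
  have op: "openin (alex_top X f) G \<longleftrightarrow>
               G \<subseteq> X \<and> (\<forall>x\<in>G. \<exists>U\<in>\<Phi>. {y. (x, y) \<in> U} \<subseteq> G)" for G
    by (rule op0[rule_format])
  note uu = uni[unfolded uniformity_on_def]
  have uId: "\<forall>U\<in>\<Phi>. U \<subseteq> X \<times> X \<and> Id_on X \<subseteq> U" using uu by (elim conjE) assumption
  have uconv: "\<forall>U\<in>\<Phi>. U\<inverse> \<in> \<Phi>" using uu by (elim conjE) assumption
  have ucomp: "\<forall>U\<in>\<Phi>. \<exists>V\<in>\<Phi>. V O V \<subseteq> U" using uu by (elim conjE) assumption
  show "Per X f = X"
  proof
    show "Per X f \<subseteq> X" unfolding Per_def by auto
    show "X \<subseteq> Per X f"
    proof
      fix a assume a: "a \<in> X"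
      define b where "b = f a"
      have bX: "b \<in> X" using assms a b_def by auto
      have aVb: "a \<in> Vf X f b" using a unfolding Vf_def b_def by (auto intro: exI[of _ 1])
      have "openin (alex_top X f) (Vf X f a)" unfolding open_alex
      proof (intro conjI ballI)
        show "Vf X f a \<subseteq> X" by (rule Vf_sub)
        fix x assume "x \<in> Vf X f a"
        then show "Vf X f x \<subseteq> Vf X f a" by (rule Vf_trans)
      qed
      then have "\<forall>x\<in>Vf X f a. \<exists>U\<in>\<Phi>. {y. (x, y) \<in> U} \<subseteq> Vf X f a"
        by (rule conjunct2[OF op[THEN iffD1]])
      then have "\<exists>U\<in>\<Phi>. {y. (a, y) \<in> U} \<subseteq> Vf X f a" using Vf_self[OF a, of f] by (rule bspec)
      then obtain U where U: "U \<in> \<Phi>" "{y. (a, y) \<in> U} \<subseteq> Vf X f a" by (elim bexE) (rule that)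
      define U' where "U' = U\<inverse>"
      have U': "U' \<in> \<Phi>" unfolding U'_def using uconv U(1) by (rule bspec)
      define G where "G = {y \<in> X. \<exists>W\<in>\<Phi>. {z. (y, z) \<in> W} \<subseteq> {z. (b, z) \<in> U'}}"
      have "openin (alex_top X f) G"
        unfolding op
      proof (intro conjI ballI)
        show "G \<subseteq> X" unfolding G_def by auto
        fix y assume "y \<in> G"
        then obtain W where W: "W \<in> \<Phi>" "{z. (y, z) \<in> W} \<subseteq> {z. (b, z) \<in> U'}" "y \<in> X"
          unfolding G_def by auto
        from ucomp W(1) have "\<exists>V\<in>\<Phi>. V O V \<subseteq> W" by (rule bspec)
        then obtain W' where W': "W' \<in> \<Phi>" "W' O W' \<subseteq> W" by (elim bexE) (rule that)
        from uId W'(1) have W'X: "W' \<subseteq> X \<times> X" by auto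
        have "{z. (y, z) \<in> W'} \<subseteq> G"
        proof
          fix z assume z: "z \<in> {z. (y, z) \<in> W'}"
          have "{w. (z, w) \<in> W'} \<subseteq> {w. (b, w) \<in> U'}"
          proof
            fix w assume "w \<in> {w. (z, w) \<in> W'}"
            then have "(y, w) \<in> W' O W'" using z by auto
            then have "(y, w) \<in> W" using W'(2) by auto
            then show "w \<in> {w. (b, w) \<in> U'}" using W(2) by auto
          qed
          moreover have "z \<in> X" using z W'X by auto
          ultimately show "z \<in> G" unfolding G_def using W'(1) by auto
        qed
        then show "\<exists>U\<in>\<Phi>. {z. (y, z) \<in> U} \<subseteq> G" using W'(1) by auto
      qed
      moreover have "b \<in> G" unfolding G_def using bX U' by auto
      ultimately have "Vf X f b \<subseteq> G" unfolding open_alex by auto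
      with aVb have "a \<in> G" by auto
      then obtain W where W: "W \<in> \<Phi>" "{z. (a, z) \<in> W} \<subseteq> {z. (b, z) \<in> U'}"
        unfolding G_def by auto
      have "Id_on X \<subseteq> W" using uId W(1) by auto
      then have "(a, a) \<in> W" using a by (auto simp: Id_on_def)
      then have "(b, a) \<in> U'" using W(2) by auto
      then have "b \<in> Vf X f a" using U(2) unfolding U'_def by auto
      then obtain n where "(f ^^ n) b = a" unfolding Vf_def by auto
      then have "(f ^^ n) (f a) = a" unfolding b_def .
      then have "(f ^^ (Suc n)) a = a" by (simp only: funpow_Suc_right o_apply)
      then have "Suc n \<ge> 1 \<and> (f ^^ (Suc n)) a = a" by simp
      then show "a \<in> Per X f" using a unfolding Per_def by blast
    qed
  qed
next
  assume per: "Per X f = X"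
  define E where "E = {(x, y). x \<in> X \<and> y \<in> Vf X f x}"
  define \<Phi> where "\<Phi> = {U. E \<subseteq> U \<and> U \<subseteq> X \<times> X}"
  have EX: "E \<subseteq> X \<times> X" unfolding E_def Vf_def by auto
  have Eid: "Id_on X \<subseteq> E"
  proof
    fix p assume "p \<in> Id_on X"
    then obtain x where "x \<in> X" "p = (x, x)" unfolding Id_on_def by auto
    then show "p \<in> E" unfolding E_def using Vf_self[of x X f] by simp
  qed
  have Esym1: "(y, x) \<in> E" if "(x, y) \<in> E" for x y
  proof -
    have x: "x \<in> X" and y: "y \<in> Vf X f x" using that unfolding E_def by auto
    have "y \<in> X" using Vf_sub y by (rule subsetD)
    moreover have "x \<in> Vf X f y" by (rule per_sym[OF per x y])
    ultimately show ?thesis unfolding E_def by simp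
  qed
  have Esym: "E\<inverse> = E" using Esym1 by auto
  have Etr: "E O E \<subseteq> E"
  proof
    fix p assume "p \<in> E O E"
    then obtain x y z where p: "p = (x, z)" and xy: "(x, y) \<in> E" and yz: "(y, z) \<in> E" by auto
    have "x \<in> X" "y \<in> Vf X f x" using xy unfolding E_def by auto
    moreover have "z \<in> Vf X f y" using yz unfolding E_def by auto
    ultimately show "p \<in> E" using Vf_trans[of y X f x] p unfolding E_def by auto
  qed
  have EPhi: "E \<in> \<Phi>" unfolding \<Phi>_def using EX by simp
  have u1: "uniformity_on X \<Phi>" unfolding uniformity_on_def
  proof (intro conjI)
    show "\<Phi> \<noteq> {}" using EPhi by auto
    show "\<forall>U\<in>\<Phi>. U \<subseteq> X \<times> X \<and> Id_on X \<subseteq> U" using Eid unfolding \<Phi>_def by auto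
    show "\<forall>U\<in>\<Phi>. \<forall>V. U \<subseteq> V \<and> V \<subseteq> X \<times> X \<longrightarrow> V \<in> \<Phi>" unfolding \<Phi>_def by auto
    show "\<forall>U\<in>\<Phi>. \<forall>V\<in>\<Phi>. U \<inter> V \<in> \<Phi>" unfolding \<Phi>_def by auto
    show "\<forall>U\<in>\<Phi>. U\<inverse> \<in> \<Phi>"
    proof
      fix U assume "U \<in> \<Phi>"
      then have "E \<subseteq> U" "U \<subseteq> X \<times> X" unfolding \<Phi>_def by auto
      then have "E\<inverse> \<subseteq> U\<inverse>" "U\<inverse> \<subseteq> X \<times> X" by auto
      then show "U\<inverse> \<in> \<Phi>" unfolding \<Phi>_def using Esym by simp
    qed
    show "\<forall>U\<in>\<Phi>. \<exists>V\<in>\<Phi>. V O V \<subseteq> U"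
    proof
      fix U assume "U \<in> \<Phi>"
      then have "E O E \<subseteq> U" using Etr unfolding \<Phi>_def by auto
      then show "\<exists>V\<in>\<Phi>. V O V \<subseteq> U" using EPhi by (rule bexI)
    qed
  qed
  have u2: "\<forall>G. openin (alex_top X f) G \<longleftrightarrow>
               G \<subseteq> X \<and> (\<forall>x\<in>G. \<exists>U\<in>\<Phi>. {y. (x, y) \<in> U} \<subseteq> G)"
  proof (intro allI iffI)
    fix G assume "openin (alex_top X f) G"
    then have G: "G \<subseteq> X" "\<forall>x\<in>G. Vf X f x \<subseteq> G" unfolding open_alex by auto
    have "{y. (x, y) \<in> E} \<subseteq> G" if "x \<in> G" for x
      using G that unfolding E_def by auto
    then show "G \<subseteq> X \<and> (\<forall>x\<in>G. \<exists>U\<in>\<Phi>. {y. (x, y) \<in> U} \<subseteq> G)"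
      using G(1) EPhi by auto
  next
    fix G assume G: "G \<subseteq> X \<and> (\<forall>x\<in>G. \<exists>U\<in>\<Phi>. {y. (x, y) \<in> U} \<subseteq> G)"
    show "openin (alex_top X f) G" unfolding open_alex
    proof (intro conjI ballI)
      show "G \<subseteq> X" using G by simp
      fix x assume x: "x \<in> G"
      then obtain U where U: "U \<in> \<Phi>" "{y. (x, y) \<in> U} \<subseteq> G" using G by auto
      have xX: "x \<in> X" using x G by auto
      have "{y. (x, y) \<in> E} \<subseteq> {y. (x, y) \<in> U}" using U(1) unfolding \<Phi>_def by auto
      moreover have "Vf X f x = {y. (x, y) \<in> E}" using xX unfolding E_def by auto
      ultimately show "Vf X f x \<subseteq> G" using U(2) by simp
    qed
  qed
  show "uniformizable (alex_top X f)" unfolding uniformizable_def top_alex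
    by (intro exI[of _ \<Phi>] conjI u1 u2)
qed

end
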